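(* In a cylindrical model category, let $s \colon X \to Y$ and $r \colon Y \to X$ be maps and $h \colon \mathrm{Cyl}(X) \to X$ a homotopy from $rs$ to $\mathrm{id}_X$, i.e. $h\circ(\delta_0\otimes X)=rs$ and $h\circ(\delta_1\otimes X)=\mathrm{id}_X$. If $X$ is cofibrant and $Y$ is weakly contractible, then $X$ is weakly contractible.
   Context: An object $Z$ of a model category is weakly contractible if $Z \to 1$ is a weak equivalence. A cylindrical model category is a model category equipped with an adjoint functorial cylinder $\mathrm{Cyl}(X)=\mathbb I\otimes X$ (a left adjoint functor, so preserving the initial object) with natural endpoint inclusions $\delta_k\otimes X\colon X\to \mathrm{Cyl}(X)$ ($k=0,1$) and a natural projection $\mathrm{Cyl}(X)\to X$ retracting both, such that for every cofibration $m$ the Leibniz (pushout) product $\delta_k\hat\otimes m$ with each endpoint inclusion is a trivial cofibration and $(\delta_0\sqcup\delta_1)\hat\otimes m$ is a cofibration. In particular $\delta_k\otimes X\cong\delta_k\hat\otimes(0\to X)$. *)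

theory Defs
  imports Main
begin

record ('o, 'm) cat =
  obj :: "'o set"
  arr :: "'m set"
  dom :: "'m \<Rightarrow> 'o"
  cod :: "'m \<Rightarrow> 'o"
  comp :: "'m \<Rightarrow> 'm \<Rightarrow> 'm"   (* comp C g f = g \<circ> f *)
  ident :: "'o \<Rightarrow> 'm"

definition hom :: "('o, 'm) cat \<Rightarrow> 'm \<Rightarrow> 'o \<Rightarrow> 'o \<Rightarrow> bool" where
  "hom C f a b \<longleftrightarrow> f \<in> arr C \<and> dom C f = a \<and> cod C f = b"

definition category :: "('o, 'm) cat \<Rightarrow> bool" where
  "category C \<longleftrightarrow>
     (\<forall>f \<in> arr C. dom C f \<in> obj C \<and> cod C f \<in> obj C) \<and>
     (\<forall>a \<in> obj C. hom C (ident C a) a a) \<and>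
     (\<forall>f \<in> arr C. \<forall>g \<in> arr C. cod C f = dom C g \<longrightarrow>
         hom C (comp C g f) (dom C f) (cod C g)) \<and>
     (\<forall>f \<in> arr C. comp C f (ident C (dom C f)) = f \<and> comp C (ident C (cod C f)) f = f) \<and>
     (\<forall>f \<in> arr C. \<forall>g \<in> arr C. \<forall>k \<in> arr C. cod C f = dom C g \<longrightarrow> cod C g = dom C k \<longrightarrow>
         comp C k (comp C g f) = comp C (comp C k g) f)"

definition initial :: "('o, 'm) cat \<Rightarrow> 'o \<Rightarrow> bool" where
  "initial C z \<longleftrightarrow> z \<in> obj C \<and> (\<forall>a \<in> obj C. \<exists>!f. hom C f z a)"

definition terminal :: "('o, 'm) cat \<Rightarrow> 'o \<Rightarrow> bool" where
  "terminal C t \<longleftrightarrow> t \<in> obj C \<and> (\<forall>a \<in> obj C. \<exists>!f. hom C f a t)"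

definition pushout :: "('o, 'm) cat \<Rightarrow> 'm \<Rightarrow> 'm \<Rightarrow> 'm \<Rightarrow> 'm \<Rightarrow> 'o \<Rightarrow> bool" where
  "pushout C f g i j P \<longleftrightarrow>
     f \<in> arr C \<and> g \<in> arr C \<and> dom C f = dom C g \<and>
     hom C i (cod C f) P \<and> hom C j (cod C g) P \<and>
     comp C i f = comp C j g \<and>
     (\<forall>Q i' j'. hom C i' (cod C f) Q \<longrightarrow> hom C j' (cod C g) Q \<longrightarrow>
        comp C i' f = comp C j' g \<longrightarrow>
        (\<exists>!u. hom C u P Q \<and> comp C u i = i' \<and> comp C u j = j'))"

definition pullback :: "('o, 'm) cat \<Rightarrow> 'm \<Rightarrow> 'm \<Rightarrow> 'm \<Rightarrow> 'm \<Rightarrow> 'o \<Rightarrow> bool" where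
  "pullback C f g i j P \<longleftrightarrow>
     f \<in> arr C \<and> g \<in> arr C \<and> cod C f = cod C g \<and>
     hom C i P (dom C f) \<and> hom C j P (dom C g) \<and>
     comp C f i = comp C g j \<and>
     (\<forall>Q i' j'. hom C i' Q (dom C f) \<longrightarrow> hom C j' Q (dom C g) \<longrightarrow>
        comp C f i' = comp C g j' \<longrightarrow>
        (\<exists>!u. hom C u Q P \<and> comp C i u = i' \<and> comp C j u = j'))"

definition coproduct :: "('o, 'm) cat \<Rightarrow> 'o \<Rightarrow> 'o \<Rightarrow> 'm \<Rightarrow> 'm \<Rightarrow> 'o \<Rightarrow> bool" where
  "coproduct C A B i j P \<longleftrightarrow>
     hom C i A P \<and> hom C j B P \<and>
     (\<forall>Q i' j'. hom C i' A Q \<longrightarrow> hom C j' B Q \<longrightarrow>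
        (\<exists>!u. hom C u P Q \<and> comp C u i = i' \<and> comp C u j = j'))"

definition finitely_complete :: "('o, 'm) cat \<Rightarrow> bool" where
  "finitely_complete C \<longleftrightarrow> (\<exists>t. terminal C t) \<and>
     (\<forall>f \<in> arr C. \<forall>g \<in> arr C. cod C f = cod C g \<longrightarrow> (\<exists>i j P. pullback C f g i j P))"

definition finitely_cocomplete :: "('o, 'm) cat \<Rightarrow> bool" where
  "finitely_cocomplete C \<longleftrightarrow> (\<exists>z. initial C z) \<and>
     (\<forall>f \<in> arr C. \<forall>g \<in> arr C. dom C f = dom C g \<longrightarrow> (\<exists>i j P. pushout C f g i j P))"

definition llp :: "('o, 'm) cat \<Rightarrow> 'm \<Rightarrow> 'm \<Rightarrow> bool" where
  "llp C i p \<longleftrightarrow>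
     (\<forall>u v. hom C u (dom C i) (dom C p) \<longrightarrow> hom C v (cod C i) (cod C p) \<longrightarrow>
        comp C p u = comp C v i \<longrightarrow>
        (\<exists>d. hom C d (cod C i) (dom C p) \<and> comp C d i = u \<and> comp C p d = v))"

definition retract_of :: "('o, 'm) cat \<Rightarrow> 'm \<Rightarrow> 'm \<Rightarrow> bool" where
  "retract_of C f g \<longleftrightarrow> f \<in> arr C \<and> g \<in> arr C \<and>
     (\<exists>i1 r1 i2 r2.
        hom C i1 (dom C f) (dom C g) \<and> hom C r1 (dom C g) (dom C f) \<and>
        hom C i2 (cod C f) (cod C g) \<and> hom C r2 (cod C g) (cod C f) \<and>
        comp C r1 i1 = ident C (dom C f) \<and> comp C r2 i2 = ident C (cod C f) \<and>
        comp C g i1 = comp C i2 f \<and> comp C f r1 = comp C r2 g)"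

definition model_category :: "('o, 'm) cat \<Rightarrow> 'm set \<Rightarrow> 'm set \<Rightarrow> 'm set \<Rightarrow> bool" where
  "model_category C W Cof Fib \<longleftrightarrow>
     category C \<and> finitely_complete C \<and> finitely_cocomplete C \<and>
     W \<subseteq> arr C \<and> Cof \<subseteq> arr C \<and> Fib \<subseteq> arr C \<and>
     (\<forall>f \<in> arr C. \<forall>g \<in> arr C. cod C f = dom C g \<longrightarrow>
        ((f \<in> W \<and> g \<in> W \<longrightarrow> comp C g f \<in> W) \<and>
         (f \<in> W \<and> comp C g f \<in> W \<longrightarrow> g \<in> W) \<and>
         (g \<in> W \<and> comp C g f \<in> W \<longrightarrow> f \<in> W))) \<and>
     (\<forall>f g. retract_of C f g \<longrightarrow>
        (g \<in> W \<longrightarrow> f \<in> W) \<and> (g \<in> Cof \<longrightarrow> f \<in> Cof) \<and> (g \<in> Fib \<longrightarrow> f \<in> Fib)) \<and>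
     (\<forall>i \<in> Cof. \<forall>p \<in> Fib \<inter> W. llp C i p) \<and>
     (\<forall>i \<in> Cof \<inter> W. \<forall>p \<in> Fib. llp C i p) \<and>
     (\<forall>f \<in> arr C. \<exists>i p. i \<in> Cof \<inter> W \<and> p \<in> Fib \<and> cod C i = dom C p \<and> comp C p i = f) \<and>
     (\<forall>f \<in> arr C. \<exists>i p. i \<in> Cof \<and> p \<in> Fib \<inter> W \<and> cod C i = dom C p \<and> comp C p i = f)"

definition cofibrant :: "('o, 'm) cat \<Rightarrow> 'm set \<Rightarrow> 'o \<Rightarrow> bool" where
  "cofibrant C Cof X \<longleftrightarrow> X \<in> obj C \<and>
     (\<forall>z f. initial C z \<longrightarrow> hom C f z X \<longrightarrow> f \<in> Cof)"

definition weakly_contractible :: "('o, 'm) cat \<Rightarrow> 'm set \<Rightarrow> 'o \<Rightarrow> bool" where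
  "weakly_contractible C W Z \<longleftrightarrow> Z \<in> obj C \<and>
     (\<forall>t f. terminal C t \<longrightarrow> hom C f Z t \<longrightarrow> f \<in> W)"

definition is_functor :: "('o, 'm) cat \<Rightarrow> ('o \<Rightarrow> 'o) \<Rightarrow> ('m \<Rightarrow> 'm) \<Rightarrow> bool" where
  "is_functor C Fo Fa \<longleftrightarrow>
     (\<forall>a \<in> obj C. Fo a \<in> obj C) \<and>
     (\<forall>f \<in> arr C. hom C (Fa f) (Fo (dom C f)) (Fo (cod C f))) \<and>
     (\<forall>a \<in> obj C. Fa (ident C a) = ident C (Fo a)) \<and>
     (\<forall>f \<in> arr C. \<forall>g \<in> arr C. cod C f = dom C g \<longrightarrow> Fa (comp C g f) = comp C (Fa g) (Fa f))"

definition nat_trans :: "('o, 'm) cat \<Rightarrow> ('o \<Rightarrow> 'o) \<Rightarrow> ('m \<Rightarrow> 'm) \<Rightarrow> ('o \<Rightarrow> 'o) \<Rightarrow> ('m \<Rightarrow> 'm)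
     \<Rightarrow> ('o \<Rightarrow> 'm) \<Rightarrow> bool" where
  "nat_trans C Fo Fa Go Ga \<eta> \<longleftrightarrow>
     (\<forall>a \<in> obj C. hom C (\<eta> a) (Fo a) (Go a)) \<and>
     (\<forall>f \<in> arr C. comp C (\<eta> (cod C f)) (Fa f) = comp C (Ga f) (\<eta> (dom C f)))"

definition left_adjoint :: "('o, 'm) cat \<Rightarrow> ('o \<Rightarrow> 'o) \<Rightarrow> ('m \<Rightarrow> 'm) \<Rightarrow> bool" where
  "left_adjoint C Fo Fa \<longleftrightarrow>
     (\<exists>Go Ga \<phi>. is_functor C Go Ga \<and>
        (\<forall>X \<in> obj C. \<forall>Y \<in> obj C.
            bij_betw (\<phi> X Y) {f. hom C f (Fo X) Y} {g. hom C g X (Go Y)}) \<and>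
        (\<forall>X' X Y Y' a f b. hom C a X' X \<longrightarrow> hom C f (Fo X) Y \<longrightarrow> hom C b Y Y' \<longrightarrow>
            \<phi> X' Y' (comp C b (comp C f (Fa a))) = comp C (Ga b) (comp C (\<phi> X Y f) a)))"

text \<open>Adjoint functorial cylinder Cyl with endpoint inclusions d0, d1 (= delta_k \<otimes> X)
  and projection p retracting both.\<close>
definition functorial_cylinder ::
  "('o, 'm) cat \<Rightarrow> ('o \<Rightarrow> 'o) \<Rightarrow> ('m \<Rightarrow> 'm) \<Rightarrow> ('o \<Rightarrow> 'm) \<Rightarrow> ('o \<Rightarrow> 'm) \<Rightarrow> ('o \<Rightarrow> 'm) \<Rightarrow> bool" where
  "functorial_cylinder C Cylo Cyla d0 d1 p \<longleftrightarrow>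
     is_functor C Cylo Cyla \<and> left_adjoint C Cylo Cyla \<and>
     nat_trans C id id Cylo Cyla d0 \<and> nat_trans C id id Cylo Cyla d1 \<and>
     nat_trans C Cylo Cyla id id p \<and>
     (\<forall>X \<in> obj C. comp C (p X) (d0 X) = ident C X \<and> comp C (p X) (d1 X) = ident C X)"

text \<open>Leibniz product of an endpoint inclusion d with m : A -> B:
  the induced map u : B \<squnion>_A Cyl A -> Cyl B; it must be a trivial cofibration.\<close>
definition leibniz_endpoint_ok ::
  "('o, 'm) cat \<Rightarrow> 'm set \<Rightarrow> 'm set \<Rightarrow> ('o \<Rightarrow> 'o) \<Rightarrow> ('m \<Rightarrow> 'm) \<Rightarrow> ('o \<Rightarrow> 'm) \<Rightarrow> bool" where
  "leibniz_endpoint_ok C W Cof Cylo Cyla d \<longleftrightarrow>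
     (\<forall>m \<in> Cof. \<forall>i j P u.
        pushout C m (d (dom C m)) i j P \<longrightarrow>
        hom C u P (Cylo (cod C m)) \<longrightarrow>
        comp C u i = d (cod C m) \<longrightarrow> comp C u j = Cyla m \<longrightarrow>
        u \<in> Cof \<inter> W)"

text \<open>Leibniz product of the boundary inclusion [d0,d1] : A \<squnion> A -> Cyl A with m : A -> B:
  the induced map u : (B \<squnion> B) \<squnion>_(A \<squnion> A) Cyl A -> Cyl B; it must be a cofibration.\<close>
definition leibniz_boundary_ok ::
  "('o, 'm) cat \<Rightarrow> 'm set \<Rightarrow> ('o \<Rightarrow> 'o) \<Rightarrow> ('m \<Rightarrow> 'm) \<Rightarrow> ('o \<Rightarrow> 'm) \<Rightarrow> ('o \<Rightarrow> 'm) \<Rightarrow> bool" where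
  "leibniz_boundary_ok C Cof Cylo Cyla d0 d1 \<longleftrightarrow>
     (\<forall>m \<in> Cof. \<forall>AA c1 c2 BB e1 e2 w mm i j P u.
        coproduct C (dom C m) (dom C m) c1 c2 AA \<longrightarrow>
        coproduct C (cod C m) (cod C m) e1 e2 BB \<longrightarrow>
        hom C w AA (Cylo (dom C m)) \<longrightarrow>
        comp C w c1 = d0 (dom C m) \<longrightarrow> comp C w c2 = d1 (dom C m) \<longrightarrow>
        hom C mm AA BB \<longrightarrow>
        comp C mm c1 = comp C e1 m \<longrightarrow> comp C mm c2 = comp C e2 m \<longrightarrow>
        pushout C mm w i j P \<longrightarrow>
        hom C u P (Cylo (cod C m)) \<longrightarrow>
        comp C (comp C u i) e1 = d0 (cod C m) \<longrightarrow>
        comp C (comp C u i) e2 = d1 (cod C m) \<longrightarrow>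
        comp C u j = Cyla m \<longrightarrow>
        u \<in> Cof)"

definition cylindrical_model_category ::
  "('o, 'm) cat \<Rightarrow> 'm set \<Rightarrow> 'm set \<Rightarrow> 'm set \<Rightarrow> ('o \<Rightarrow> 'o) \<Rightarrow> ('m \<Rightarrow> 'm)
     \<Rightarrow> ('o \<Rightarrow> 'm) \<Rightarrow> ('o \<Rightarrow> 'm) \<Rightarrow> ('o \<Rightarrow> 'm) \<Rightarrow> bool" where
  "cylindrical_model_category C W Cof Fib Cylo Cyla d0 d1 p \<longleftrightarrow>
     model_category C W Cof Fib \<and>
     functorial_cylinder C Cylo Cyla d0 d1 p \<and>
     leibniz_endpoint_ok C W Cof Cylo Cyla d0 \<and>
     leibniz_endpoint_ok C W Cof Cylo Cyla d1 \<and>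
     leibniz_boundary_ok C Cof Cylo Cyla d0 d1"

end

theory Submission
  imports Defs
begin

lemma cat_ax1: "category C \<Longrightarrow> \<forall>f \<in> arr C. dom C f \<in> obj C \<and> cod C f \<in> obj C"
  unfolding category_def by (elim conjE) assumption
lemma cat_ax2: "category C \<Longrightarrow> \<forall>a \<in> obj C. hom C (ident C a) a a"
  unfolding category_def by (elim conjE) assumption
lemma cat_ax4: "category C \<Longrightarrow> \<forall>f \<in> arr C. comp C f (ident C (dom C f)) = f \<and> comp C (ident C (cod C f)) f = f"
  unfolding category_def by (elim conjE) assumption

lemma hom_objs: "category C \<Longrightarrow> hom C f a b \<Longrightarrow> a \<in> obj C \<and> b \<in> obj C"
  using cat_ax1 unfolding hom_def by blast

lemma hom_arr: "hom C f a b \<Longrightarrow> f \<in> arr C"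
  unfolding hom_def by blast

lemma cat_comp:
  assumes c: "category C" and f: "hom C f a b" and g: "hom C g b c"
  shows "hom C (comp C g f) a c"
proof -
  have A: "\<forall>f \<in> arr C. \<forall>g \<in> arr C. cod C f = dom C g \<longrightarrow>
         hom C (comp C g f) (dom C f) (cod C g)"
    using c unfolding category_def by (elim conjE) assumption
  have "f \<in> arr C" "g \<in> arr C" "cod C f = dom C g" "dom C f = a" "cod C g = c"
    using f g unfolding hom_def by auto
  thus ?thesis using A by auto
qed

lemma cat_id: "category C \<Longrightarrow> a \<in> obj C \<Longrightarrow> hom C (ident C a) a a"
  using cat_ax2 by blast

lemma cat_idl: assumes "category C" "hom C f a b" shows "comp C (ident C b) f = f"
proof -
  have h: "f \<in> arr C" "cod C f = b" using assms(2) unfolding hom_def by auto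
  show ?thesis using bspec[OF cat_ax4[OF assms(1)] h(1)] h(2) by simp
qed

lemma cat_idr: assumes "category C" "hom C f a b" shows "comp C f (ident C a) = f"
proof -
  have h: "f \<in> arr C" "dom C f = a" using assms(2) unfolding hom_def by auto
  show ?thesis using bspec[OF cat_ax4[OF assms(1)] h(1)] h(2) by simp
qed

lemma cat_assoc:
  assumes cc: "category C" and f: "hom C f a b" and g: "hom C g b c" and k: "hom C k c d"
  shows "comp C k (comp C g f) = comp C (comp C k g) f"
proof -
  have A: "\<forall>f \<in> arr C. \<forall>g \<in> arr C. \<forall>k \<in> arr C. cod C f = dom C g \<longrightarrow> cod C g = dom C k \<longrightarrow>
         comp C k (comp C g f) = comp C (comp C k g) f"
    using cc unfolding category_def by (elim conjE) assumption
  have "f \<in> arr C" "g \<in> arr C" "k \<in> arr C" "cod C f = dom C g" "cod C g = dom C k"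
    using f g k unfolding hom_def by auto
  thus ?thesis using A by simp
qed

lemma initial_uniq: assumes c: "category C" and z: "initial C z" and f: "hom C f z a" and g: "hom C g z a"
  shows "f = g"
proof -
  have "a \<in> obj C" using hom_objs[OF c f] by blast
  hence "\<exists>!f. hom C f z a" using z unfolding initial_def by blast
  thus ?thesis using f g by (metis ex1E)
qed

lemma initial_ex: "initial C z \<Longrightarrow> a \<in> obj C \<Longrightarrow> \<exists>f. hom C f z a"
  unfolding initial_def by blast

lemma terminal_uniq: assumes c: "category C" and z: "terminal C t" and f: "hom C f a t" and g: "hom C g a t"
  shows "f = g"
proof -
  have "a \<in> obj C" using hom_objs[OF c f] by blast
  hence "\<exists>!f. hom C f a t" using z unfolding terminal_def by blast
  thus ?thesis using f g by (metis ex1E)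
qed

lemma cyl_initial:
  assumes c: "category C" and F: "is_functor C Fo Fa" and L: "left_adjoint C Fo Fa" and z: "initial C z"
  shows "initial C (Fo z)"
proof -
  obtain Go Ga \<phi> where G: "is_functor C Go Ga" and
    B: "\<forall>X \<in> obj C. \<forall>Y \<in> obj C. bij_betw (\<phi> X Y) {f. hom C f (Fo X) Y} {g. hom C g X (Go Y)}"
    using L unfolding left_adjoint_def by blast
  have zo: "z \<in> obj C" using z unfolding initial_def by blast
  have "Fo z \<in> obj C" using F zo unfolding is_functor_def by blast
  moreover have "\<exists>!f. hom C f (Fo z) a" if a: "a \<in> obj C" for a
  proof -
    have Ga: "Go a \<in> obj C" using G a unfolding is_functor_def by blast
    have bb: "bij_betw (\<phi> z a) {f. hom C f (Fo z) a} {g. hom C g z (Go a)}" using B zo a by blast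
    obtain g where g: "hom C g z (Go a)" using initial_ex[OF z Ga] by blast
    then obtain f where f: "hom C f (Fo z) a" "\<phi> z a f = g"
      using bb unfolding bij_betw_def by (metis (mono_tags, lifting) imageE mem_Collect_eq)
    have "f' = f" if "hom C f' (Fo z) a" for f'
    proof -
      have "\<phi> z a f' \<in> {g. hom C g z (Go a)}" using bb that unfolding bij_betw_def by blast
      hence "\<phi> z a f' = g" using g initial_uniq[OF c z] by blast
      thus ?thesis using bb that f unfolding bij_betw_def inj_on_def by auto
    qed
    thus ?thesis using f by blast
  qed
  ultimately show ?thesis unfolding initial_def by blast
qed

lemma mc_cat: "model_category C W Cof Fib \<Longrightarrow> category C"
  by (simp add: model_category_def)
lemma mc_cocomp: "model_category C W Cof Fib \<Longrightarrow> finitely_cocomplete C"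
  by (simp add: model_category_def)
lemma mc_sub: "model_category C W Cof Fib \<Longrightarrow> W \<subseteq> arr C \<and> Cof \<subseteq> arr C \<and> Fib \<subseteq> arr C"
  by (simp add: model_category_def)
lemma mc_llp: "model_category C W Cof Fib \<Longrightarrow> i \<in> Cof \<Longrightarrow> i \<in> W \<Longrightarrow> p \<in> Fib \<Longrightarrow> llp C i p"
  unfolding model_category_def by blast
lemma mc_fact: "model_category C W Cof Fib \<Longrightarrow> f \<in> arr C \<Longrightarrow>
   \<exists>i p. i \<in> Cof \<inter> W \<and> p \<in> Fib \<and> cod C i = dom C p \<and> comp C p i = f"
  unfolding model_category_def by blast
lemma mc_ret: "model_category C W Cof Fib \<Longrightarrow> retract_of C f g \<Longrightarrow> g \<in> W \<Longrightarrow> f \<in> W"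
  unfolding model_category_def by blast
lemma mc_23: "model_category C W Cof Fib \<Longrightarrow> f \<in> arr C \<Longrightarrow> g \<in> arr C \<Longrightarrow> cod C f = dom C g \<Longrightarrow>
   f \<in> W \<Longrightarrow> comp C g f \<in> W \<Longrightarrow> g \<in> W"
  unfolding model_category_def by blast

lemma retract_W:
  assumes M: "model_category C W Cof Fib" and g: "g \<in> W" and f: "hom C f a b"
    and "hom C g a' b'" and "hom C i1 a a'" and "hom C r1 a' a" and "hom C i2 b b'" and "hom C r2 b' b"
    and "comp C r1 i1 = ident C a" and "comp C r2 i2 = ident C b"
    and "comp C g i1 = comp C i2 f" and "comp C f r1 = comp C r2 g"
  shows "f \<in> W"
proof -
  have eqs: "dom C f = a" "cod C f = b" "dom C g = a'" "cod C g = b'"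
    using assms by (auto simp: hom_def)
  have "retract_of C f g" unfolding retract_of_def eqs
  proof (intro conjI)
    show "f \<in> arr C" using hom_arr[OF assms(3)] .
    show "g \<in> arr C" using hom_arr[OF assms(4)] .
    show "\<exists>i1 r1 i2 r2. hom C i1 a a' \<and> hom C r1 a' a \<and> hom C i2 b b' \<and> hom C r2 b' b \<and>
        comp C r1 i1 = ident C a \<and> comp C r2 i2 = ident C b \<and>
        comp C g i1 = comp C i2 f \<and> comp C f r1 = comp C r2 g"
      apply (rule exI[of _ i1], rule exI[of _ r1], rule exI[of _ i2], rule exI[of _ r2])
      by (simp add: assms(5-12))
  qed
  thus ?thesis using mc_ret[OF M _ g] by blast
qed

theorem mainTheorem10:
  fixes C :: "('o, 'm) cat"
  assumes cyl: "cylindrical_model_category C W Cof Fib Cylo Cyla d0 d1 p"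
    and s: "hom C s X Y" and r: "hom C r Y X"
    and h: "hom C h (Cylo X) X"
    and h0: "comp C h (d0 X) = comp C r s"
    and h1: "comp C h (d1 X) = ident C X"
    and cofX: "cofibrant C Cof X"
    and contrY: "weakly_contractible C W Y"
  shows "weakly_contractible C W X"
proof -
  have M: "model_category C W Cof Fib" using cyl unfolding cylindrical_model_category_def by blast
  have cat: "category C" using mc_cat[OF M] .
  have FC: "functorial_cylinder C Cylo Cyla d0 d1 p" using cyl unfolding cylindrical_model_category_def by blast
  have LE: "leibniz_endpoint_ok C W Cof Cylo Cyla d0" using cyl unfolding cylindrical_model_category_def by blast
  have F: "is_functor C Cylo Cyla" and LA: "left_adjoint C Cylo Cyla"
    using FC unfolding functorial_cylinder_def by blast+
  have d0h: "\<And>a. a \<in> obj C \<Longrightarrow> hom C (d0 a) a (Cylo a)"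
    using FC unfolding functorial_cylinder_def nat_trans_def by simp
  have d1h: "\<And>a. a \<in> obj C \<Longrightarrow> hom C (d1 a) a (Cylo a)"
    using FC unfolding functorial_cylinder_def nat_trans_def by simp
  have Fh: "\<And>f. f \<in> arr C \<Longrightarrow> hom C (Cyla f) (Cylo (dom C f)) (Cylo (cod C f))"
    using F unfolding is_functor_def by blast
  have FO: "\<And>a. a \<in> obj C \<Longrightarrow> Cylo a \<in> obj C"
    using F unfolding is_functor_def by blast
  have Xo: "X \<in> obj C" and Yo: "Y \<in> obj C" using hom_objs[OF cat s] by auto
  obtain z where z: "initial C z" using mc_cocomp[OF M] unfolding finitely_cocomplete_def by blast
  have zo: "z \<in> obj C" using z unfolding initial_def by blast
  have Cz: "initial C (Cylo z)" using cyl_initial[OF cat F LA z] .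
  obtain m where m: "hom C m z X" using initial_ex[OF z Xo] by blast
  have mC: "m \<in> Cof" using cofX z m unfolding cofibrant_def by blast
  obtain jz where jz: "hom C jz (Cylo z) X" using initial_ex[OF Cz Xo] by blast
  have md: "dom C m = z" "cod C m = X" using m unfolding hom_def by auto
  have d0z: "hom C (d0 z) z (Cylo z)" using d0h[OF zo] .
  have idX: "hom C (ident C X) X X" using cat_id[OF cat Xo] .
  have po0: "pushout C m (d0 z) (ident C X) jz X"
    unfolding pushout_def
  proof (intro conjI allI impI)
    show "m \<in> arr C" using hom_arr[OF m] .
    show "d0 z \<in> arr C" using hom_arr[OF d0z] .
    show "dom C m = dom C (d0 z)" using m d0z unfolding hom_def by simp
    show "hom C (ident C X) (cod C m) X" using idX md by simp
    show "hom C jz (cod C (d0 z)) X" using jz d0z unfolding hom_def by simp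
    show "comp C (ident C X) m = comp C jz (d0 z)"
      using initial_uniq[OF cat z cat_comp[OF cat m idX] cat_comp[OF cat d0z jz]] .
    fix Q i' j'
    assume i': "hom C i' (cod C m) Q" and j': "hom C j' (cod C (d0 z)) Q"
      and "comp C i' m = comp C j' (d0 z)"
    have i'': "hom C i' X Q" using i' md by simp
    have j'': "hom C j' (Cylo z) Q" using j' d0z unfolding hom_def by simp
    show "\<exists>!u. hom C u X Q \<and> comp C u (ident C X) = i' \<and> comp C u jz = j'"
    proof (rule ex1I[of _ i'])
      show "hom C i' X Q \<and> comp C i' (ident C X) = i' \<and> comp C i' jz = j'"
        using i'' cat_idr[OF cat i''] initial_uniq[OF cat Cz cat_comp[OF cat jz i''] j''] by simp
      fix u assume "hom C u X Q \<and> comp C u (ident C X) = i' \<and> comp C u jz = j'"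
      thus "u = i'" using cat_idr[OF cat, of u X Q] by simp
    qed
  qed
  have d0X: "hom C (d0 X) X (Cylo X)" using d0h[OF Xo] .
  have "d0 X \<in> Cof \<inter> W"
  proof -
    have "comp C (d0 X) (ident C X) = d0 X" using cat_idr[OF cat d0X] .
    moreover have "comp C (d0 X) jz = Cyla m"
      using initial_uniq[OF cat Cz cat_comp[OF cat jz d0X]] Fh[OF hom_arr[OF m]] md by simp
    moreover have "\<forall>i j P u. pushout C m (d0 z) i j P \<longrightarrow> hom C u P (Cylo X) \<longrightarrow>
        comp C u i = d0 X \<longrightarrow> comp C u j = Cyla m \<longrightarrow> u \<in> Cof \<inter> W"
      using bspec[OF LE[unfolded leibniz_endpoint_ok_def] mC] unfolding md .
    ultimately show ?thesis using po0 d0X by blast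
  qed
  hence d0C: "d0 X \<in> Cof" and d0W: "d0 X \<in> W" by auto
  have "dom C s = dom C (d0 X)" using s d0X unfolding hom_def by simp
  then obtain jY k Q where po: "pushout C s (d0 X) jY k Q"
    using mc_cocomp[OF M] hom_arr[OF s] hom_arr[OF d0X]
    unfolding finitely_cocomplete_def by blast
  have cs: "cod C s = Y" "cod C (d0 X) = Cylo X" using s d0X unfolding hom_def by auto
  have jY: "hom C jY Y Q" and k: "hom C k (Cylo X) Q" and sq: "comp C jY s = comp C k (d0 X)"
    using po unfolding pushout_def cs by blast+
  have poU: "\<And>Q' i' j'. hom C i' Y Q' \<Longrightarrow> hom C j' (Cylo X) Q' \<Longrightarrow> comp C i' s = comp C j' (d0 X) \<Longrightarrow>
        \<exists>!u. hom C u Q Q' \<and> comp C u jY = i' \<and> comp C u k = j'"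
  proof -
    have "\<forall>Q' i' j'. hom C i' Y Q' \<longrightarrow> hom C j' (Cylo X) Q' \<longrightarrow> comp C i' s = comp C j' (d0 X) \<longrightarrow>
        (\<exists>!u. hom C u Q Q' \<and> comp C u jY = i' \<and> comp C u k = j')"
      using po unfolding pushout_def cs by blast
    thus "\<And>Q' i' j'. hom C i' Y Q' \<Longrightarrow> hom C j' (Cylo X) Q' \<Longrightarrow> comp C i' s = comp C j' (d0 X) \<Longrightarrow>
        \<exists>!u. hom C u Q Q' \<and> comp C u jY = i' \<and> comp C u k = j'" by blast
  qed
  have Qo: "Q \<in> obj C" using hom_objs[OF cat jY] by blast
  have jYW: "jY \<in> W"
  proof -
    obtain i' p' where i'W: "i' \<in> Cof \<inter> W" and p'F: "p' \<in> Fib" and ip: "cod C i' = dom C p'"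
      and pi: "comp C p' i' = jY"
      using mc_fact[OF M hom_arr[OF jY]] by blast
    define Z where "Z = cod C i'"
    have i'h: "hom C i' Y Z" and p'h: "hom C p' Z Q"
    proof -
      have a: "i' \<in> arr C" "p' \<in> arr C" using i'W p'F mc_sub[OF M] by auto
      have h1': "hom C i' (dom C i') Z" "hom C p' Z (cod C p')" using a ip unfolding Z_def hom_def by auto
      have "hom C jY (dom C i') (cod C p')" using cat_comp[OF cat h1'] pi by simp
      hence "dom C i' = Y" "cod C p' = Q" using jY unfolding hom_def by auto
      thus "hom C i' Y Z" "hom C p' Z Q" using h1' by auto
    qed
    have sq2: "comp C p' (comp C i' s) = comp C k (d0 X)"
      using cat_assoc[OF cat s i'h p'h] pi sq by simp
    have ll: "llp C (d0 X) p'" using mc_llp[OF M d0C d0W p'F] .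
    have eq: "dom C (d0 X) = X" "cod C (d0 X) = Cylo X" "dom C p' = Z" "cod C p' = Q"
      using d0X p'h unfolding hom_def by auto
    obtain e where e: "hom C e (Cylo X) Z" "comp C e (d0 X) = comp C i' s" "comp C p' e = k"
      using ll[unfolded llp_def eq, rule_format, OF cat_comp[OF cat s i'h] k sq2] by blast
    obtain D where D: "hom C D Q Z" "comp C D jY = i'" "comp C D k = e"
      using poU[OF i'h e(1) e(2)[symmetric]] by blast
    have pD: "comp C p' D = ident C Q"
    proof -
      have u: "\<exists>!u. hom C u Q Q \<and> comp C u jY = jY \<and> comp C u k = k"
        using poU[OF jY k sq] .
      have a: "hom C (comp C p' D) Q Q" using cat_comp[OF cat D(1) p'h] .
      have b: "comp C (comp C p' D) jY = jY" using cat_assoc[OF cat jY D(1) p'h] D pi by simp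
      have c: "comp C (comp C p' D) k = k" using cat_assoc[OF cat k D(1) p'h] D e by simp
      have a2: "hom C (ident C Q) Q Q" using cat_id[OF cat Qo] .
      show ?thesis using u a b c a2 cat_idl[OF cat jY] cat_idl[OF cat k] by blast
    qed
    show ?thesis
      apply (rule retract_W[OF M _ jY i'h, of "ident C Y" "ident C Y" D p'])
      using i'W apply blast
      apply (rule cat_id[OF cat Yo])
      apply (rule cat_id[OF cat Yo])
      apply (rule D(1))
      apply (rule p'h)
      apply (rule cat_idl[OF cat cat_id[OF cat Yo]])
      apply (rule pD)
      apply (simp only: cat_idr[OF cat i'h] D(2))
      apply (simp only: cat_idr[OF cat jY] pi)
      done
  qed
  obtain H where H: "hom C H Q X" "comp C H jY = r" "comp C H k = h"
    using poU[OF r h h0[symmetric]] by blast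
  have d1X: "hom C (d1 X) X (Cylo X)" using d1h[OF Xo] .
  have kd: "hom C (comp C k (d1 X)) X Q" using cat_comp[OF cat d1X k] .
  have Hkd: "comp C H (comp C k (d1 X)) = ident C X"
    using cat_assoc[OF cat d1X k H(1)] H h1 by simp
  show ?thesis unfolding weakly_contractible_def
  proof (intro conjI allI impI)
    show "X \<in> obj C" using Xo .
    fix t f assume t: "terminal C t" and f: "hom C f X t"
    have to: "t \<in> obj C" using t unfolding terminal_def by blast
    have it: "hom C (ident C t) t t" using cat_id[OF cat to] .
    have cQ: "hom C (comp C f H) Q t" using cat_comp[OF cat H(1) f] .
    have "comp C (comp C f H) jY = comp C f r" using cat_assoc[OF cat jY H(1) f] H by simp
    moreover have "comp C f r \<in> W" using contrY t cat_comp[OF cat r f] unfolding weakly_contractible_def by blast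
    ultimately have cQW: "comp C f H \<in> W"
      using mc_23[OF M hom_arr[OF jY] hom_arr[OF cQ]] jY cQ jYW unfolding hom_def by simp
    show "f \<in> W"
      apply (rule retract_W[OF M cQW f cQ kd H(1) it it Hkd])
        apply (rule cat_idl[OF cat it])
       apply (rule terminal_uniq[OF cat t cat_comp[OF cat kd cQ] cat_comp[OF cat f it]])
      apply (rule terminal_uniq[OF cat t cat_comp[OF cat H(1) f] cat_comp[OF cat cQ it]])
      done
  qed
qed

end
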